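(* Suppose that for some $T>0$ there is a function $I_T:\mathbb R^d\times\mathbb R^d\to[0,\infty]$, lower semicontinuous, with $I_T(0,0)>0$, such that for every $q\in\mathbb R^d$ and compact $V\subset\mathbb R^d$, \[\lim_{\delta\to0}\limsup_{\varepsilon\to0}\varepsilon\log\sup_{z\in E:|\varepsilon z-q|<\delta}\mathbb P_z(Z^\varepsilon(T)\in V)\le-\inf_{q'\in V}I_T(q,q').\] Then for any $A>0$, any $q\in\mathbb R^d$ and any bounded set $V\subset\mathbb R^d$ there is $K>0$ such that \[\lim_{\delta\to0}\limsup_{n\to\infty}\sup_{z\in E:|z-nq|<\delta n}\frac1n\log\int_{Kn}^\infty\mathbb P_z\bigl(Z(t)\in nV\bigr)\,dt\ \le\ -A.\]
   Context: Let $E\subset\mathbb R^d$ be unbounded and $(Z(t))_{t\ge0}$ a continuous-time strong Markov process on $E$ with right-continuous paths having left limits; $\mathbb P_z$ denotes probability given $Z(0)=z$; $Z^\varepsilon(t)=\varepsilon Z(t/\varepsilon)$. For $B\subset\mathbb R^d$ and $n>0$, $nB=\{nx:x\in B\}$. *)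

theory Defs
  imports "HOL-Probability.Probability"
begin

definition eln :: "ereal \<Rightarrow> ereal" where
  "eln x = (if x \<le> 0 then -\<infinity> else if x = \<infinity> then \<infinity> else ereal (ln (real_of_ereal x)))"

definition lsc :: "('b::topological_space \<Rightarrow> ereal) \<Rightarrow> bool" where
  "lsc f \<longleftrightarrow> (\<forall>c. open {x. c < f x})"

definition nat_filt :: "'w measure \<Rightarrow> (real \<Rightarrow> 'w \<Rightarrow> 'a::topological_space) \<Rightarrow> real \<Rightarrow> 'w set set" where
  "nat_filt S Z t = sigma_sets (space S)
     {Z s -` B \<inter> space S | s B. 0 \<le> s \<and> s \<le> t \<and> B \<in> sets borel}"

definition nat_filt_inf :: "'w measure \<Rightarrow> (real \<Rightarrow> 'w \<Rightarrow> 'a::topological_space) \<Rightarrow> 'w set set" where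
  "nat_filt_inf S Z = sigma_sets (space S)
     {Z s -` B \<inter> space S | s B. 0 \<le> s \<and> B \<in> sets borel}"

definition is_stopping_time :: "'w measure \<Rightarrow> (real \<Rightarrow> 'w \<Rightarrow> 'a::topological_space) \<Rightarrow> ('w \<Rightarrow> real) \<Rightarrow> bool" where
  "is_stopping_time S Z \<tau> \<longleftrightarrow> (\<forall>\<omega>\<in>space S. 0 \<le> \<tau> \<omega>) \<and>
     (\<forall>t\<ge>0. {\<omega>\<in>space S. \<tau> \<omega> \<le> t} \<in> nat_filt S Z t)"

definition stopped_sets :: "'w measure \<Rightarrow> (real \<Rightarrow> 'w \<Rightarrow> 'a::topological_space) \<Rightarrow> ('w \<Rightarrow> real) \<Rightarrow> 'w set set" where
  "stopped_sets S Z \<tau> = {A \<in> nat_filt_inf S Z.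
     \<forall>t\<ge>0. A \<inter> {\<omega>\<in>space S. \<tau> \<omega> \<le> t} \<in> nat_filt S Z t}"

text \<open>A strong Markov process on the state space E with cadlag paths:
  sample space S, law P z of the process started at z (for z in E),
  process Z t \<omega>.\<close>
definition strong_markov_cadlag ::
  "'w measure \<Rightarrow> ('a::euclidean_space \<Rightarrow> 'w measure) \<Rightarrow> (real \<Rightarrow> 'w \<Rightarrow> 'a) \<Rightarrow> 'a set \<Rightarrow> bool" where
  "strong_markov_cadlag S P Z E \<longleftrightarrow>
     (\<forall>z\<in>E. prob_space (P z) \<and> sets (P z) = sets S) \<and>
     (\<forall>t\<ge>0. Z t \<in> borel_measurable S) \<and>
     (\<forall>z\<in>E. AE \<omega> in P z. Z 0 \<omega> = z) \<and>
     (\<forall>\<omega>\<in>space S. \<forall>t\<ge>0. Z t \<omega> \<in> E) \<and>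
     (\<forall>\<omega>\<in>space S. \<forall>t\<ge>0. continuous (at_right t) (\<lambda>s. Z s \<omega>)) \<and>
     (\<forall>\<omega>\<in>space S. \<forall>t>0. \<exists>l. ((\<lambda>s. Z s \<omega>) \<longlongrightarrow> l) (at_left t)) \<and>
     (\<forall>s\<ge>0. \<forall>B\<in>sets borel.
        (\<lambda>z. measure (P z) {\<omega>\<in>space S. Z s \<omega> \<in> B}) \<in> borel_measurable (restrict_space borel E)) \<and>
     (\<forall>z\<in>E. \<forall>\<tau>. is_stopping_time S Z \<tau> \<longrightarrow>
        (\<forall>A\<in>stopped_sets S Z \<tau>. \<forall>s\<ge>0. \<forall>B\<in>sets borel.
          measure (P z) (A \<inter> {\<omega>\<in>space S. Z (\<tau> \<omega> + s) \<omega> \<in> B}) =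
          (\<integral>\<omega>. indicator A \<omega> * measure (P (Z (\<tau> \<omega>) \<omega>)) {\<omega>'\<in>space S. Z s \<omega>' \<in> B} \<partial>P z)))"

end

theory Submission imports Defs begin

lemma eln_mono: "x \<le> y \<Longrightarrow> eln x \<le> eln y"
  unfolding eln_def
  by (cases x; cases y) auto

lemma eln_ereal_pos: "0 < x \<Longrightarrow> eln (ereal x) = ereal (ln x)"
  unfolding eln_def by auto

lemma Lim_mono_at_right0:
  fixes G :: "real \<Rightarrow> ereal"
  assumes mono: "\<And>a b. 0 < a \<Longrightarrow> a \<le> b \<Longrightarrow> G a \<le> G b"
  shows "Lim (at_right 0) G = Inf (G ` {0<..})"
proof -
  have "(G \<longlongrightarrow> Inf (G ` {0<..})) (at_right 0)"
  proof (rule order_tendstoI)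
    fix a assume "Inf (G ` {0<..}) < a"
    then obtain d where d: "d > 0" "G d < a" by (auto simp: Inf_less_iff)
    show "\<forall>\<^sub>F x in at_right 0. G x < a"
      unfolding eventually_at_right_field
      using d by (intro exI[of _ d]) (metis le_less_trans less_imp_le mono)
  next
    fix a assume a: "a < Inf (G ` {0<..})"
    show "\<forall>\<^sub>F x in at_right 0. a < G x"
      unfolding eventually_at_right_field
      using a by (intro exI[of _ 1]) (auto intro: less_le_trans INF_lower)
  qed
  then show ?thesis by (intro tendsto_Lim) auto
qed

theorem lemma3p3:
  fixes S :: "'w measure" and P :: "'a::euclidean_space \<Rightarrow> 'w measure"
    and Z :: "real \<Rightarrow> 'w \<Rightarrow> 'a" and E :: "'a set"
    and T :: real and I :: "'a \<times> 'a \<Rightarrow> ereal"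
  assumes proc: "strong_markov_cadlag S P Z E"
    and unbdd: "\<not> bounded E"
    and T_pos: "T > 0"
    and I_nonneg: "\<forall>x. I x \<ge> 0"
    and I_lsc: "lsc I"
    and I_00: "I (0, 0) > 0"
    and ldp: "\<And>q V. compact V \<Longrightarrow>
      Lim (at_right (0::real)) (\<lambda>\<delta>.
        Limsup (at_right (0::real)) (\<lambda>\<epsilon>.
          ereal \<epsilon> * eln (SUP z\<in>{z\<in>E. norm (\<epsilon> *\<^sub>R z - q) < \<delta>}.
            ereal (measure (P z) {\<omega>\<in>space S. \<epsilon> *\<^sub>R Z (T / \<epsilon>) \<omega> \<in> V}))))
      \<le> - (INF q'\<in>V. I (q, q'))"
  shows "\<And>A q V. A > 0 \<Longrightarrow> bounded V \<Longrightarrow> V \<in> sets borel \<Longrightarrow>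
    \<exists>K>0. Lim (at_right (0::real)) (\<lambda>\<delta>.
       Limsup at_top (\<lambda>n::real.
         SUP z\<in>{z\<in>E. norm (z - n *\<^sub>R q) < \<delta> * n}.
           ereal (1 / n) * eln (enn2ereal
             (\<integral>\<^sup>+ t. indicator {K * n..} t *
                 ennreal (measure (P z) {\<omega>\<in>space S. Z t \<omega> \<in> (\<lambda>x. n *\<^sub>R x) ` V}) \<partial>lborel))))
     \<le> - ereal A"
proof -
  have pm: "prob_space (P z)" "sets (P z) = sets S" if "z \<in> E" for z
    using proc that unfolding strong_markov_cadlag_def by auto
  have Zm: "Z t \<in> borel_measurable S" if "t \<ge> 0" for t
    using proc that unfolding strong_markov_cadlag_def by auto
  obtain c1 where c1: "0 < ereal c1" "ereal c1 < I (0, 0)"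
    using ereal_dense2[OF I_00] by blast
  have "open {x. ereal c1 < I x}" using I_lsc unfolding lsc_def by blast
  moreover have "(0, 0) \<in> {x. ereal c1 < I x}" using c1 by simp
  ultimately obtain r0 where r0: "r0 > 0" "ball (0, 0) r0 \<subseteq> {x. ereal c1 < I x}"
    by (meson open_contains_ball)
  define r where "r = r0 / 2"
  have r: "r > 0" using r0 by (simp add: r_def)
  have Ir: "ereal c1 < I (0, q')" if "norm q' \<le> r" for q'
  proof -
    have "dist (0::'a, q') (0, 0) < r0"
      using that r0 by (simp add: dist_Pair_Pair r_def)
    then have "(0::'a, q') \<in> ball (0, 0) r0" by (simp add: dist_commute)
    then show ?thesis using r0 by blast
  qed
  have INFr: "ereal c1 \<le> (INF q'\<in>cball 0 r. I (0, q'))"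
    using Ir by (intro INF_greatest) (auto intro: less_imp_le)
  define G where "G = (\<lambda>\<delta>.
        Limsup (at_right (0::real)) (\<lambda>\<epsilon>.
          ereal \<epsilon> * eln (SUP z\<in>{z\<in>E. norm (\<epsilon> *\<^sub>R z - 0) < \<delta>}.
            ereal (measure (P z) {\<omega>\<in>space S. \<epsilon> *\<^sub>R Z (T / \<epsilon>) \<omega> \<in> cball 0 r}))))"
  have Gmono: "G a \<le> G b" if "0 < a" "a \<le> b" for a b
    unfolding G_def
  proof (rule Limsup_mono)
    show "\<forall>\<^sub>F x in at_right 0. ereal x * eln (SUP z\<in>{z\<in>E. norm (x *\<^sub>R z - 0) < a}.
            ereal (measure (P z) {\<omega>\<in>space S. x *\<^sub>R Z (T / x) \<omega> \<in> cball 0 r}))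
        \<le> ereal x * eln (SUP z\<in>{z\<in>E. norm (x *\<^sub>R z - 0) < b}.
            ereal (measure (P z) {\<omega>\<in>space S. x *\<^sub>R Z (T / x) \<omega> \<in> cball 0 r}))"
      unfolding eventually_at_right_field
      using that
      by (intro exI[of _ 1]) (auto intro!: ereal_mult_left_mono eln_mono SUP_subset_mono)
  qed
  have L1: "Lim (at_right 0) G \<le> - (INF q'\<in>cball 0 r. I (0, q'))"
    unfolding G_def by (rule ldp) simp
  have L2: "- (INF q'\<in>cball 0 r. I (0, q')) \<le> - ereal c1"
    using INFr by (simp only: ereal_minus_le_minus)
  have "Lim (at_right 0) G \<le> - ereal c1"
    using L1 L2 by (rule order_trans)
  then have "Inf (G ` {0<..}) < - ereal (c1 / 2)"
  proof -
    have "Inf (G ` {0<..}) \<le> ereal (- c1)"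
      using Lim_mono_at_right0[of G] Gmono \<open>Lim (at_right 0) G \<le> - ereal c1\<close> by simp
    also have "ereal (- c1) < ereal (- (c1 / 2))" using c1 by simp
    finally show ?thesis by simp
  qed
  then obtain \<delta>0 where d0: "\<delta>0 > 0" "G \<delta>0 < - ereal (c1 / 2)"
    by (auto simp: Inf_less_iff)
  then have "\<forall>\<^sub>F \<epsilon> in at_right 0. ereal \<epsilon> * eln (SUP z\<in>{z\<in>E. norm (\<epsilon> *\<^sub>R z - 0) < \<delta>0}.
            ereal (measure (P z) {\<omega>\<in>space S. \<epsilon> *\<^sub>R Z (T / \<epsilon>) \<omega> \<in> cball 0 r})) < - ereal (c1 / 2)"
    unfolding G_def by (intro Limsup_lessD) auto
  then obtain \<epsilon>0 where e0: "\<epsilon>0 > 0" "\<And>\<epsilon>. 0 < \<epsilon> \<Longrightarrow> \<epsilon> < \<epsilon>0 \<Longrightarrow>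
      ereal \<epsilon> * eln (SUP z\<in>{z\<in>E. norm (\<epsilon> *\<^sub>R z - 0) < \<delta>0}.
            ereal (measure (P z) {\<omega>\<in>space S. \<epsilon> *\<^sub>R Z (T / \<epsilon>) \<omega> \<in> cball 0 r})) < - ereal (c1 / 2)"
    unfolding eventually_at_right_field by auto
  define c where "c = c1 / 2"
  have c: "c > 0" using c1 by (simp add: c_def)
  have key: "measure (P z) {\<omega>\<in>space S. \<epsilon> *\<^sub>R Z (T / \<epsilon>) \<omega> \<in> cball 0 r} \<le> exp (- c / \<epsilon>)"
    if "0 < \<epsilon>" "\<epsilon> < \<epsilon>0" "z \<in> E" "norm (\<epsilon> *\<^sub>R z) < \<delta>0" for \<epsilon> z
  proof -
    define m where "m = measure (P z) {\<omega>\<in>space S. \<epsilon> *\<^sub>R Z (T / \<epsilon>) \<omega> \<in> cball 0 r}"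
    have "ereal \<epsilon> * eln (ereal m) \<le> ereal \<epsilon> * eln (SUP z\<in>{z\<in>E. norm (\<epsilon> *\<^sub>R z - 0) < \<delta>0}.
            ereal (measure (P z) {\<omega>\<in>space S. \<epsilon> *\<^sub>R Z (T / \<epsilon>) \<omega> \<in> cball 0 r}))"
      using that unfolding m_def
      by (intro ereal_mult_left_mono eln_mono SUP_upper) auto
    also have "\<dots> < - ereal c" using e0 that by (simp add: c_def)
    finally have lt: "ereal \<epsilon> * eln (ereal m) < - ereal c" .
    show ?thesis
    proof (cases "m = 0")
      case True then show ?thesis by (simp add: m_def)
    next
      case False
      then have "m > 0" unfolding m_def using measure_nonneg[of "P z"] by (metis order_le_less)
      then have "\<epsilon> * ln m < - c" using lt by (simp add: eln_ereal_pos)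
      then have "ln m < - c / \<epsilon>" using that by (simp add: field_simps)
      then have "m < exp (- c / \<epsilon>)" using \<open>m > 0\<close> by (metis exp_less_mono exp_ln)
      then show ?thesis by (simp add: m_def)
    qed
  qed
  show "\<exists>K>0. Lim (at_right (0::real)) (\<lambda>\<delta>.
       Limsup at_top (\<lambda>n::real.
         SUP z\<in>{z\<in>E. norm (z - n *\<^sub>R q) < \<delta> * n}.
           ereal (1 / n) * eln (enn2ereal
             (\<integral>\<^sup>+ t. indicator {K * n..} t *
                 ennreal (measure (P z) {\<omega>\<in>space S. Z t \<omega> \<in> (\<lambda>x. n *\<^sub>R x) ` V}) \<partial>lborel))))
     \<le> - ereal A" if A: "A > 0" and bV: "bounded V" and sV: "V \<in> sets borel" for A q V
  proof -
    obtain R where R: "R > 0" "\<And>v. v \<in> V \<Longrightarrow> norm v \<le> R"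
      using bV unfolding bounded_pos by blast
    define K where "K = max (max (T * (norm q + 1) / \<delta>0 + 1) (T * R / r)) (T * (A + 1) / c)"
    have Kq: "T * (norm q + 1) / \<delta>0 + 1 \<le> K" and KR: "T * R / r \<le> K" and KA: "T * (A + 1) / c \<le> K"
      unfolding K_def by auto
    have Kpos: "K > 0"
    proof -
      have "T * (norm q + 1) / \<delta>0 \<ge> 0" using T_pos d0 by simp
      then show ?thesis using Kq by linarith
    qed
    have K1: "T * (norm q + 1) < K * \<delta>0"
      using Kq d0 by (simp add: field_simps)
    have K2: "T * R \<le> K * r"
      using KR r by (simp add: field_simps)
    have K3: "A + 1 \<le> (c / T) * K"
      using KA c T_pos by (simp add: field_simps)
    define N where "N = max (T / (K * \<epsilon>0) + 1) (\<bar>ln (c / T)\<bar> + 1)"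
    define H where "H = (\<lambda>\<delta>. Limsup at_top (\<lambda>n::real.
         SUP z\<in>{z\<in>E. norm (z - n *\<^sub>R q) < \<delta> * n}.
           ereal (1 / n) * eln (enn2ereal
             (\<integral>\<^sup>+ t. indicator {K * n..} t *
                 ennreal (measure (P z) {\<omega>\<in>space S. Z t \<omega> \<in> (\<lambda>x. n *\<^sub>R x) ` V}) \<partial>lborel))))"
    have Hmono: "H a \<le> H b" if "0 < a" "a \<le> b" for a b
      unfolding H_def
    proof (rule Limsup_mono)
      have "\<forall>\<^sub>F n in at_top. (0::real) < n" by (rule eventually_gt_at_top)
      then show "\<forall>\<^sub>F n in at_top. (SUP z\<in>{z\<in>E. norm (z - n *\<^sub>R q) < a * n}.
           ereal (1 / n) * eln (enn2ereal
             (\<integral>\<^sup>+ t. indicator {K * n..} t *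
                 ennreal (measure (P z) {\<omega>\<in>space S. Z t \<omega> \<in> (\<lambda>x. n *\<^sub>R x) ` V}) \<partial>lborel)))
         \<le> (SUP z\<in>{z\<in>E. norm (z - n *\<^sub>R q) < b * n}.
           ereal (1 / n) * eln (enn2ereal
             (\<integral>\<^sup>+ t. indicator {K * n..} t *
                 ennreal (measure (P z) {\<omega>\<in>space S. Z t \<omega> \<in> (\<lambda>x. n *\<^sub>R x) ` V}) \<partial>lborel)))"
      proof eventually_elim
        case (elim n)
        have "a * n \<le> b * n" using elim that by (simp add: mult_right_mono)
        then show ?case by (intro SUP_subset_mono) auto
      qed
    qed
    have bound: "ereal (1 / n) * eln (enn2ereal
             (\<integral>\<^sup>+ t. indicator {K * n..} t *
                 ennreal (measure (P z) {\<omega>\<in>space S. Z t \<omega> \<in> (\<lambda>x. n *\<^sub>R x) ` V}) \<partial>lborel))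
          \<le> - ereal A"
      if n: "n \<ge> N" and z: "z \<in> E" "norm (z - n *\<^sub>R q) < 1 * n" for n z
    proof -
      have nN1: "T / (K * \<epsilon>0) + 1 \<le> n" and nN2: "\<bar>ln (c / T)\<bar> + 1 \<le> n"
        using n unfolding N_def by auto
      have npos: "n > 0"
      proof -
        have "T / (K * \<epsilon>0) > 0" using T_pos Kpos e0(1) by simp
        then show ?thesis using nN1 by linarith
      qed
      have Ke: "K * \<epsilon>0 > 0" using Kpos e0(1) by simp
      have "T / (K * \<epsilon>0) < n" using nN1 by linarith
      then have "T < n * (K * \<epsilon>0)" using Ke by (simp add: pos_divide_less_eq)
      then have nK: "T < K * n * \<epsilon>0" by (simp add: ac_simps)
      have nz: "norm z \<le> n * (norm q + 1)"
      proof -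
        have "norm z \<le> norm (z - n *\<^sub>R q) + norm (n *\<^sub>R q)" by (metis norm_triangle_ineq diff_add_cancel)
        also have "\<dots> \<le> n + n * norm q" using z npos by simp
        finally show ?thesis by (simp add: algebra_simps)
      qed
      have pt: "indicator {K * n..} t *
                 ennreal (measure (P z) {\<omega>\<in>space S. Z t \<omega> \<in> (\<lambda>x. n *\<^sub>R x) ` V})
           \<le> indicator {K * n..} t * ennreal (exp (- (c / T) * t))" for t
      proof (cases "t \<in> {K * n..}")
        case False then show ?thesis by simp
      next
        case True
        then have tK: "K * n \<le> t" by simp
        have Knpos: "K * n > 0" using Kpos npos by simp
        then have tpos: "t > 0" using tK by linarith
        define \<epsilon> where "\<epsilon> = T / t"
        have epos: "\<epsilon> > 0" using tpos T_pos by (simp add: \<epsilon>_def)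
        have eKn: "\<epsilon> \<le> T / (K * n)"
          unfolding \<epsilon>_def using tK Knpos T_pos by (simp add: frac_le)
        have "T / (K * n) < \<epsilon>0" using nK Knpos by (simp add: field_simps)
        then have elt: "\<epsilon> < \<epsilon>0" using eKn by linarith
        have Te: "T / \<epsilon> = t" using T_pos tpos by (simp add: \<epsilon>_def)
        have "norm (\<epsilon> *\<^sub>R z) = \<epsilon> * norm z" using epos by simp
        also have "\<dots> \<le> (T / (K * n)) * (n * (norm q + 1))"
          using eKn nz epos by (intro mult_mono) auto
        also have "\<dots> = T * (norm q + 1) / K" using npos Kpos by (simp add: field_simps)
        also have "\<dots> < \<delta>0" using K1 Kpos by (simp add: field_simps)
        finally have zd: "norm (\<epsilon> *\<^sub>R z) < \<delta>0" .
        have sub: "{\<omega>\<in>space S. Z t \<omega> \<in> (\<lambda>x. n *\<^sub>R x) ` V}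
              \<subseteq> {\<omega>\<in>space S. \<epsilon> *\<^sub>R Z (T / \<epsilon>) \<omega> \<in> cball 0 r}"
        proof safe
          fix \<omega> v assume "\<omega> \<in> space S" "Z t \<omega> = n *\<^sub>R v" "v \<in> V"
          have "norm (\<epsilon> *\<^sub>R (n *\<^sub>R v)) = \<epsilon> * n * norm v" using epos npos by simp
          also have "\<dots> \<le> (T / (K * n)) * n * R"
            using eKn R \<open>v \<in> V\<close> epos npos Kpos T_pos by (intro mult_mono) auto
          also have "\<dots> = T * R / K" using npos Kpos by (simp add: field_simps)
          also have "\<dots> \<le> r" using K2 Kpos by (simp add: field_simps)
          finally show "\<epsilon> *\<^sub>R Z (T / \<epsilon>) \<omega> \<in> cball 0 r"
            using Te \<open>Z t \<omega> = n *\<^sub>R v\<close> by simp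
        qed
        have Zt: "Z t \<in> borel_measurable S" using Zm tpos by simp
        have "{\<omega>\<in>space S. \<epsilon> *\<^sub>R Z (T / \<epsilon>) \<omega> \<in> cball 0 r} \<in> sets S"
        proof -
          have f: "(\<lambda>\<omega>. \<epsilon> *\<^sub>R Z t \<omega>) \<in> borel_measurable S"
            using Zt by measurable
          have "(\<lambda>\<omega>. \<epsilon> *\<^sub>R Z t \<omega>) -` cball 0 r \<inter> space S \<in> sets S"
            by (rule measurable_sets[OF f]) simp
          moreover have "{\<omega>\<in>space S. \<epsilon> *\<^sub>R Z (T / \<epsilon>) \<omega> \<in> cball 0 r}
             = (\<lambda>\<omega>. \<epsilon> *\<^sub>R Z t \<omega>) -` cball 0 r \<inter> space S" using Te by auto
          ultimately show ?thesis by simp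
        qed
        then have meas: "{\<omega>\<in>space S. \<epsilon> *\<^sub>R Z (T / \<epsilon>) \<omega> \<in> cball 0 r} \<in> sets (P z)"
          using pm(2)[OF z(1)] by simp
        interpret prob_space "P z" using pm(1)[OF z(1)] .
        have "measure (P z) {\<omega>\<in>space S. Z t \<omega> \<in> (\<lambda>x. n *\<^sub>R x) ` V}
            \<le> measure (P z) {\<omega>\<in>space S. \<epsilon> *\<^sub>R Z (T / \<epsilon>) \<omega> \<in> cball 0 r}"
          by (rule finite_measure_mono[OF sub meas])
        also have "\<dots> \<le> exp (- c / \<epsilon>)"
          using key[OF epos elt z(1) zd] .
        also have "- c / \<epsilon> = - (c / T) * t" using T_pos tpos by (simp add: \<epsilon>_def field_simps)
        finally show ?thesis
          by (intro mult_left_mono ennreal_leI) auto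
      qed
      define M where "M = exp (- (c / T) * (K * n)) / (c / T)"
      have cT: "c / T > 0" using c T_pos by simp
      have Mpos: "M > 0" using cT c T_pos unfolding M_def by (intro divide_pos_pos) auto
      have "(\<integral>\<^sup>+ t. indicator {K * n..} t *
                 ennreal (measure (P z) {\<omega>\<in>space S. Z t \<omega> \<in> (\<lambda>x. n *\<^sub>R x) ` V}) \<partial>lborel)
          \<le> (\<integral>\<^sup>+ t. indicator {K * n..} t * ennreal (exp (- (c / T) * t)) \<partial>lborel)"
        by (intro nn_integral_mono pt)
      also have "\<dots> = ennreal M"
        unfolding M_def
        unfolding indicator_mult_ennreal
        by (rule nn_integral_has_integral_lebesgue[OF _ has_integral_exp_minus_to_infinity[OF cT]]) simp
      finally have "enn2ereal (\<integral>\<^sup>+ t. indicator {K * n..} t *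
                 ennreal (measure (P z) {\<omega>\<in>space S. Z t \<omega> \<in> (\<lambda>x. n *\<^sub>R x) ` V}) \<partial>lborel)
          \<le> enn2ereal (ennreal M)"
        by (simp only: less_eq_ennreal.rep_eq)
      then have intle: "enn2ereal (\<integral>\<^sup>+ t. indicator {K * n..} t *
                 ennreal (measure (P z) {\<omega>\<in>space S. Z t \<omega> \<in> (\<lambda>x. n *\<^sub>R x) ` V}) \<partial>lborel)
          \<le> ereal M"
        using Mpos by (simp only: enn2ereal_ennreal less_imp_le)
      have lnM: "ln M = - (c / T) * (K * n) - ln (c / T)"
        unfolding M_def using cT by (subst ln_div) auto
      have lnle: "ln M / n \<le> - A"
      proof -
        have "ln M / n = - (c / T) * K - ln (c / T) / n" using npos by (simp add: lnM field_simps)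
        moreover have "- ln (c / T) / n \<le> 1"
        proof -
          have "- ln (c / T) \<le> n" using nN2 abs_ge_minus_self[of "ln (c / T)"] by linarith
          then show ?thesis using npos by (simp only: pos_divide_le_eq)
        qed
        ultimately show ?thesis using K3 by linarith
      qed
      have "ereal (1 / n) * eln (enn2ereal (\<integral>\<^sup>+ t. indicator {K * n..} t *
                 ennreal (measure (P z) {\<omega>\<in>space S. Z t \<omega> \<in> (\<lambda>x. n *\<^sub>R x) ` V}) \<partial>lborel))
          \<le> ereal (1 / n) * eln (ereal M)"
        using npos by (intro ereal_mult_left_mono eln_mono intle) auto
      also have "\<dots> = ereal (ln M / n)" using Mpos by (simp add: eln_ereal_pos)
      also have "\<dots> \<le> - ereal A" using lnle by simp
      finally show ?thesis .
    qed
    have H1: "H 1 \<le> - ereal A"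
      unfolding H_def
    proof (rule Limsup_bounded)
      show "\<forall>\<^sub>F n in at_top. (SUP z\<in>{z\<in>E. norm (z - n *\<^sub>R q) < 1 * n}.
           ereal (1 / n) * eln (enn2ereal
             (\<integral>\<^sup>+ t. indicator {K * n..} t *
                 ennreal (measure (P z) {\<omega>\<in>space S. Z t \<omega> \<in> (\<lambda>x. n *\<^sub>R x) ` V}) \<partial>lborel)))
         \<le> - ereal A"
        unfolding eventually_at_top_linorder
        by (intro exI[of _ N] allI impI SUP_least bound) auto
    qed
    have "Lim (at_right 0) H = Inf (H ` {0<..})"
      using Hmono by (rule Lim_mono_at_right0)
    also have "\<dots> \<le> H 1" by (intro INF_lower) simp
    finally have "Lim (at_right 0) H \<le> - ereal A" using H1 by simp
    then show ?thesis using Kpos unfolding H_def by blast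
  qed
qed

end
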